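(* Let $G$ be a finite graph with $\mathrm{Aut}(G)\neq\{\mathrm{id}\}$, and let $\alpha\in\mathrm{Aut}(G)\setminus\{\mathrm{id}\}$ be such that $c(\alpha)=\max\{c(\beta):\beta\in\mathrm{Aut}(G)\}$ (equivalently $\theta(G)=c(\alpha)+1$). Then there is a prime number $p$ such that $\alpha$ has order $p$. In particular, every cycle of $\alpha$ has length $p$ or $1$.
   Context: All graphs are finite and simple. For a permutation $\alpha$ of $V(G)$, $c(\alpha)$ denotes the number of cycles in the cycle decomposition of $\alpha$, fixed points counting as cycles of length 1, with the convention $c(\mathrm{id})=0$. The distinguishing threshold $\theta(G)$ of a graph $G$ is the minimum number $k$ such that every vertex coloring of $G$ using exactly $k$ colors is distinguishing (i.e. no non-identity automorphism of $G$ maps every vertex to a vertex of the same color); equivalently, $\theta(G)=1+\max\{c(\alpha):\alpha\in\mathrm{Aut}(G)\}$. *)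

theory Defs
  imports Main "HOL-Combinatorics.Orbits" "HOL-Computational_Algebra.Primes"
begin

definition simple_graph :: "'a set \<Rightarrow> ('a \<Rightarrow> 'a \<Rightarrow> bool) \<Rightarrow> bool" where
  "simple_graph V E \<longleftrightarrow> finite V \<and> (\<forall>x y. E x y \<longrightarrow> x \<in> V \<and> y \<in> V)
     \<and> (\<forall>x y. E x y \<longrightarrow> E y x) \<and> (\<forall>x. \<not> E x x)"

definition graph_aut :: "'a set \<Rightarrow> ('a \<Rightarrow> 'a \<Rightarrow> bool) \<Rightarrow> ('a \<Rightarrow> 'a) set" where
  "graph_aut V E = {\<alpha>. \<alpha> permutes V \<and> (\<forall>x\<in>V. \<forall>y\<in>V. E x y \<longleftrightarrow> E (\<alpha> x) (\<alpha> y))}"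

text \<open>Number of cycles of a permutation of V (fixed points count as cycles),
  with the convention that the identity has 0 cycles.\<close>
definition num_cycles :: "'a set \<Rightarrow> ('a \<Rightarrow> 'a) \<Rightarrow> nat" where
  "num_cycles V \<alpha> = (if \<alpha> = id then 0 else card ((\<lambda>x. orbit \<alpha> x) ` V))"

end

theory Submission
  imports Defs
begin

lemma period_dvd:
  assumes "permutation f"
  shows "(f ^^ n) x = x \<longleftrightarrow> card (orbit f x) dvd n"
proof -
  have xin: "x \<in> orbit f x" using assms by (rule permutation_self_in_orbit)
  define L where "L = funpow_dist1 f x x"
  have Lpos: "0 < L" unfolding L_def by simp
  have cardL: "card (orbit f x) = L"
    unfolding L_def
    by (subst orbit_conv_funpow_dist1[OF xin], subst card_image[OF inj_on_funpow_dist1[OF xin]]) simp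
  have fL: "(f ^^ L) x = x" unfolding L_def by (rule funpow_dist1_prop[OF xin])
  have mult: "(f ^^ (k * L)) x = x" for k
  proof (induction k)
    case 0 then show ?case by simp
  next
    case (Suc k)
    have "(f ^^ (Suc k * L)) x = (f ^^ L) ((f ^^ (k * L)) x)"
      by (simp add: funpow_add add.commute)
    then show ?case using Suc fL by simp
  qed
  have red: "(f ^^ n) x = (f ^^ (n mod L)) x"
  proof -
    have "(f ^^ n) x = (f ^^ (n mod L + (n div L) * L)) x" by simp
    also have "\<dots> = (f ^^ (n mod L)) ((f ^^ ((n div L) * L)) x)" by (simp only: funpow_add comp_def)
    also have "\<dots> = (f ^^ (n mod L)) x" using mult by simp
    finally show ?thesis .
  qed
  show ?thesis
  proof
    assume h: "(f ^^ n) x = x"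
    show "card (orbit f x) dvd n"
    proof (rule ccontr)
      assume "\<not> card (orbit f x) dvd n"
      then have "0 < n mod L" using cardL by (simp add: dvd_eq_mod_eq_0)
      moreover have "n mod L < L" using Lpos by simp
      ultimately have "(f ^^ (n mod L)) x \<noteq> x" unfolding L_def by (rule funpow_dist1_least)
      with h red show False by simp
    qed
  next
    assume "card (orbit f x) dvd n"
    then obtain k where "n = L * k" using cardL by (auto elim: dvdE)
    then show "(f ^^ n) x = x" using mult[of k] by (simp add: mult.commute)
  qed
qed

lemma permutes_funpow0:
  assumes "p permutes S" shows "(p ^^ n) permutes S"
  using assms by (induct n) (simp add: permutes_def, metis funpow_Suc_right permutes_compose)

lemma funpow_diff:
  assumes "inj p" and "i \<le> j" "(p ^^ i) a = (p ^^ j) a" shows "(p ^^ (j - i)) a = a"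
proof -
  have "(p ^^ i) ((p ^^ (j - i)) a) = (p ^^ i) a"
    using assms(2-3) by (metis (no_types) add_diff_inverse_nat funpow_add not_le o_def)
  thus ?thesis
    unfolding inj_eq[OF inj_fn[OF assms(1)], of i] .
qed

lemma finite_order:
  assumes "p permutes V" "finite V"
  obtains N where "0 < N" "p ^^ N = id"
proof -
  have sub: "range (\<lambda>k. p ^^ k) \<subseteq> {f. f permutes V}"
    using permutes_funpow0[OF assms(1)] by auto
  have "finite {f. f permutes V}" using assms(2) by (rule finite_permutations)
  then have fin: "finite (range (\<lambda>k. p ^^ k))" using sub finite_subset by blast
  have "\<not> inj (\<lambda>k::nat. p ^^ k)"
  proof
    assume "inj (\<lambda>k::nat. p ^^ k)"
    then have "finite (UNIV :: nat set)" using fin finite_imageD by blast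
    then show False by simp
  qed
  then obtain i j where ij: "p ^^ i = p ^^ j" "i < j"
    unfolding inj_def by (metis linorder_neqE_nat)
  have injp: "inj p" using assms(1) permutes_inj by blast
  have "(p ^^ (j - i)) x = x" for x
    using funpow_diff[OF injp, of i j x] ij by simp
  then have "p ^^ (j - i) = id" by auto
  with ij that[of "j - i"] show thesis by simp
qed

lemma aut_funpow:
  assumes "\<alpha> \<in> graph_aut V E"
  shows "\<alpha> ^^ n \<in> graph_aut V E"
proof -
  have p: "\<alpha> permutes V" and e: "\<forall>x\<in>V. \<forall>y\<in>V. E x y \<longleftrightarrow> E (\<alpha> x) (\<alpha> y)"
    using assms by (auto simp: graph_aut_def)
  have "\<forall>x\<in>V. \<forall>y\<in>V. E x y \<longleftrightarrow> E ((\<alpha> ^^ n) x) ((\<alpha> ^^ n) y)"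
  proof (induction n)
    case 0 then show ?case by simp
  next
    case (Suc n)
    show ?case
    proof (intro ballI)
      fix x y assume "x \<in> V" "y \<in> V"
      moreover have "(\<alpha> ^^ n) x \<in> V" "(\<alpha> ^^ n) y \<in> V"
        using permutes_in_image[OF permutes_funpow0[OF p]] \<open>x \<in> V\<close> \<open>y \<in> V\<close> by auto
      ultimately show "E x y \<longleftrightarrow> E ((\<alpha> ^^ Suc n) x) ((\<alpha> ^^ Suc n) y)"
        using Suc e by simp
    qed
  qed
  then show ?thesis using permutes_funpow0[OF p] by (simp add: graph_aut_def)
qed

lemma permutes_funpow_dup:
  assumes "p permutes S" shows "(p ^^ n) permutes S"
  using assms by (induct n) (simp add: permutes_def, metis funpow_Suc_right permutes_compose)

theorem mainTheorem1:
  fixes V :: "'a set" and E :: "'a \<Rightarrow> 'a \<Rightarrow> bool" and \<alpha> :: "'a \<Rightarrow> 'a"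
  assumes "simple_graph V E"
    and "graph_aut V E \<noteq> {id}"
    and "\<alpha> \<in> graph_aut V E" and "\<alpha> \<noteq> id"
    and "\<forall>\<beta>\<in>graph_aut V E. num_cycles V \<beta> \<le> num_cycles V \<alpha>"
  shows "\<exists>p::nat. prime p \<and> (\<alpha> ^^ p = id) \<and> (\<forall>n. 0 < n \<and> n < p \<longrightarrow> \<alpha> ^^ n \<noteq> id)
           \<and> (\<forall>x\<in>V. card (orbit \<alpha> x) = p \<or> card (orbit \<alpha> x) = 1)"
proof -
  have finV: "finite V" using assms(1) by (simp add: simple_graph_def)
  have pa: "\<alpha> permutes V" using assms(3) by (simp add: graph_aut_def)
  have perma: "permutation \<alpha>" using pa finV permutation_permutes by blast
  obtain N where N: "0 < N" "\<alpha> ^^ N = id" using finite_order[OF pa finV] by blast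
  define m where "m = (LEAST n. 0 < n \<and> \<alpha> ^^ n = id)"
  have m: "0 < m" "\<alpha> ^^ m = id" unfolding m_def using LeastI[of "\<lambda>n. 0 < n \<and> \<alpha> ^^ n = id" N] N by auto
  have mmin: "\<And>n. 0 < n \<Longrightarrow> n < m \<Longrightarrow> \<alpha> ^^ n \<noteq> id"
    unfolding m_def using not_less_Least by blast
  have m1: "m \<noteq> 1" using m assms(4) by auto
  have pm: "prime m"
  proof (rule ccontr)
    assume np: "\<not> prime m"
    obtain q where q: "prime q" "q dvd m" using prime_factor_nat[OF m1] by blast
    have qm: "q < m" using q np m(1) dvd_imp_le[of q m] by (cases "q = m") auto
    have q2: "2 \<le> q" using q(1) prime_ge_2_nat by blast
    define \<beta> where "\<beta> = \<alpha> ^^ q"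
    have baut: "\<beta> \<in> graph_aut V E" unfolding \<beta>_def by (rule aut_funpow[OF assms(3)])
    have bid: "\<beta> \<noteq> id" unfolding \<beta>_def using mmin[of q] q2 qm by simp
    have pb: "\<beta> permutes V" unfolding \<beta>_def by (rule permutes_funpow0[OF pa])
    have permb: "permutation \<beta>" using pb finV permutation_permutes by blast
    show False
    proof (cases "\<exists>x\<in>V. q dvd card (orbit \<alpha> x)")
      case True
      then obtain x where x: "x \<in> V" "q dvd card (orbit \<alpha> x)" by blast
      define L where "L = card (orbit \<alpha> x)"
      have Lpos: "0 < L" unfolding L_def
        using finite_orbit[OF permutation_self_in_orbit[OF perma]] orbit_nonempty
        by (simp add: card_gt_0_iff)
      have "(\<beta> ^^ (L div q)) x = (\<alpha> ^^ (q * (L div q))) x" unfolding \<beta>_def by (simp add: funpow_mult)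
      also have "q * (L div q) = L" using x(2) unfolding L_def by simp
      also have "(\<alpha> ^^ L) x = x" using period_dvd[OF perma] unfolding L_def by simp
      finally have "card (orbit \<beta> x) dvd L div q" using period_dvd[OF permb] by simp
      moreover have "0 < L div q" using x(2) Lpos q2 unfolding L_def
        by (metis dvd_div_eq_0_iff gr0I less_numeral_extra(3) not_numeral_le_zero)
      ultimately have "card (orbit \<beta> x) \<le> L div q" by (simp add: dvd_imp_le)
      also have "L div q < L" using Lpos q2 by simp
      finally have clt: "card (orbit \<beta> x) < card (orbit \<alpha> x)" unfolding L_def .
      have bsub: "\<And>z. orbit \<beta> z \<subseteq> orbit \<alpha> z"
      proof
        fix z y assume "y \<in> orbit \<beta> z"
        then obtain n where "0 < n" "y = (\<beta> ^^ n) z" by (auto simp: orbit_altdef)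
        then have "y = (\<alpha> ^^ (q * n)) z" "0 < q * n" using q2 unfolding \<beta>_def by (auto simp: funpow_mult)
        then show "y \<in> orbit \<alpha> z" by (auto simp: orbit_altdef)
      qed
      have "orbit \<beta> x \<noteq> orbit \<alpha> x" using clt by auto
      then obtain y where y: "y \<in> orbit \<alpha> x" "y \<notin> orbit \<beta> x" using bsub[of x] by blast
      have yV: "y \<in> V" using y(1) permutes_orbit_subset[OF pa x(1)] by blast
      have neq: "orbit \<beta> y \<noteq> orbit \<beta> x" using y(2) permutation_self_in_orbit[OF permb, of y] by blast
      have aeq: "\<And>z w. w \<in> orbit \<alpha> z \<Longrightarrow> orbit \<alpha> w = orbit \<alpha> z"
        using cyclic_on_orbit'[OF perma] orbit_cyclic_eq3 by metis
      define h where "h = (\<lambda>Ob. \<Union> (orbit \<alpha> ` Ob))"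
      have hO: "\<And>z. h (orbit \<beta> z) = orbit \<alpha> z"
      proof -
        fix z
        have "\<And>w. w \<in> orbit \<beta> z \<Longrightarrow> orbit \<alpha> w = orbit \<alpha> z" using bsub aeq by blast
        moreover have "z \<in> orbit \<beta> z" using permutation_self_in_orbit[OF permb] .
        ultimately have "orbit \<alpha> ` orbit \<beta> z = {orbit \<alpha> z}" by blast
        then show "h (orbit \<beta> z) = orbit \<alpha> z" unfolding h_def by simp
      qed
      have img: "orbit \<alpha> ` V = h ` (orbit \<beta> ` V)" using hO by (auto simp: image_image)
      have ninj: "\<not> inj_on h (orbit \<beta> ` V)"
      proof
        assume "inj_on h (orbit \<beta> ` V)"
        moreover have "h (orbit \<beta> y) = h (orbit \<beta> x)" using hO aeq[OF y(1)] by simp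
        ultimately show False using neq x(1) yV by (meson image_eqI inj_onD)
      qed
      have finB: "finite (orbit \<beta> ` V)" using finV by simp
      have "card (h ` (orbit \<beta> ` V)) \<le> card (orbit \<beta> ` V)" by (rule card_image_le[OF finB])
      moreover have "card (h ` (orbit \<beta> ` V)) \<noteq> card (orbit \<beta> ` V)"
        using ninj inj_on_iff_eq_card[OF finB] by blast
      ultimately have "card (orbit \<alpha> ` V) < card (orbit \<beta> ` V)" using img by simp
      then have "num_cycles V \<alpha> < num_cycles V \<beta>"
        using bid assms(4) by (simp add: num_cycles_def)
      then show False using assms(5) baut by fastforce
    next
      case False
      define k where "k = m div q"
      have mk: "m = q * k" unfolding k_def using q(2) by simp
      have kpos: "0 < k" using mk m(1) by (cases k) auto
      have klt: "k < m" using mk q2 kpos by simp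
      have "(\<alpha> ^^ k) x = x" for x
      proof (cases "x \<in> V")
        case True
        have "card (orbit \<alpha> x) dvd q * k" using period_dvd[OF perma, of m x] m(2) mk by simp
        moreover have "coprime (card (orbit \<alpha> x)) q"
          using False True q(1) by (metis coprime_commute prime_imp_coprime)
        ultimately have "card (orbit \<alpha> x) dvd k" using coprime_dvd_mult_right_iff by blast
        then show ?thesis using period_dvd[OF perma] by blast
      next
        case False
        then show ?thesis using permutes_not_in[OF permutes_funpow0[OF pa]] by blast
      qed
      then have "\<alpha> ^^ k = id" by auto
      then show False using mmin kpos klt by blast
    qed
  qed
  have "\<forall>x\<in>V. card (orbit \<alpha> x) = m \<or> card (orbit \<alpha> x) = 1"
  proof
    fix x assume "x \<in> V"
    have "card (orbit \<alpha> x) dvd m" using period_dvd[OF perma, of m x] m(2) by simp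
    then show "card (orbit \<alpha> x) = m \<or> card (orbit \<alpha> x) = 1" using pm prime_nat_iff by blast
  qed
  then show ?thesis using pm m(2) mmin by blast
qed

end
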